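(* Suppose $\sigma:\overline{\mathbb F}\to\overline{\mathbb F}$ satisfies Condition 1 with constants $c_1,c_2,\eta\in\mathbb F$, and let $z\in\mathbb F$ with $|z|\le 1^+$. Then there exists a depth-1 $\sigma$-network $\mu_z:\overline{\mathbb F}\to\overline{\mathbb F}$ (i.e., a map $x\mapsto(x\otimes w)\oplus b$ with $w,b\in\mathbb F$) such that one of the following holds: (a) $\gamma(\mu_z^\sharp(\langle-1,z\rangle))\subset[-\Omega,\eta]$ and $\gamma(\mu_z^\sharp(\langle z^+,1\rangle))\subset[\eta^+,\Omega]$; (b) $\gamma(\mu_z^\sharp(\langle-1,z\rangle))\subset[\eta^+,\Omega]$ and $\gamma(\mu_z^\sharp(\langle z^+,1\rangle))\subset[-\Omega,\eta]$.
   Context: Floating point. Fix integers $E\ge 5$ and $M$ with $2^{E-1}\ge M\ge 3$; $\mathfrak e_{\min}=-2^{E-1}+2$, $\mathfrak e_{\max}=2^{E-1}-1$. $\mathbb F=\{(-1)^b(s_0.s_1\dots s_M)_2\cdot 2^e: b,s_i\in\{0,1\},e\in\{\mathfrak e_{\min},\dots,\mathfrak e_{\max}\}\}$, $\overline{\mathbb F}=\mathbb F\cup\{-\infty,+\infty,\mathrm{NaN}\}$, $\Omega=2^{\mathfrak e_{\max}}(2-2^{-M})$, $\varepsilon=2^{-M-1}$. $x^+$ is the next larger element of $\overline{\mathbb F}\setminus\{\mathrm{NaN}\}$ (so $1^+=1+2^{-M}$). $\mathrm{rnd}$ is round-to-nearest-ties-to-even with overflow to $\pm\infty$ at $|x|\ge\Omega+2^{\mathfrak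 e_{\max}}\varepsilon$; $x\oplus y=\mathrm{rnd}(x+y)$, $x\otimes y=\mathrm{rnd}(xy)$ for finite operands (IEEE-754 otherwise). Intervals: $\mathbb I=\{\langle a,b\rangle:a,b\in\overline{\mathbb F}\setminus\{\mathrm{NaN}\},a\le b\}\cup\{\top\}$, $\gamma(\langle a,b\rangle)=[a,b]\cap\overline{\mathbb F}$, $\gamma(\top)=\overline{\mathbb F}$. $\langle a,b\rangle\odot^\sharp\langle c,d\rangle$ ($\odot\in\{\oplus,\otimes\}$) is $\langle\min S,\max S\rangle$ for $S=\{a\odot c,a\odot d,b\odot c,b\odot d\}$, or $\top$ if $\mathrm{NaN}\in S$ or an operand is $\top$. For $\mu_z(x)=(x\otimes w)\oplus b$, $\mu_z^\sharp(\mathcal I)=(\mathcal I\otimes^\sharp\langle w,w\rangle)\oplus^\sharp\langle b,b\rangle$. Condition 1 with constants $c_1,c_2,\eta$: (C1) $\sigma(c_1)=0$, $|\sigma(c_2)|\in[\frac\varepsilon2+2\varepsilon^2,\frac54-2\varepsilon]$, $\max\{|c_1|,|c_2|\}\ge2^{\mathfrak e_{\min}+1}$, and $\sigma(x)$ between $\sigma(c_1),\sigma(c_2)$ for all $x$ between $c_1,c_2$; (C2) $|\eta|\in[2^{\mathfrak e_{\min}+5},4-8\varepsilon]$, $|\sigma(\eta)|,|\sigma(\eta^+)|\in[2^{\mathfrak e_{\min}+5},2^{\mathfrak e_{\max}-6}|\eta|]$, and for all $x,y\in\mathbb F$ with $x\le\eta<\eta^+\le y$, either $\sigma(x)\le\sigma(\eta)<\sigma(\eta^+)\le\sigma(y)$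 or $\sigma(x)\ge\sigma(\eta)>\sigma(\eta^+)\ge\sigma(y)$; (C3) there is $\lambda\in[0,2^{\mathfrak e_{\max}-7}\min\{|\sigma(\eta)|,2^{M+3}\}]$ with $|\sigma(x)-\sigma(\eta)|\le\lambda|x-\eta|$ and $|\sigma(y)-\sigma(\eta^+)|\le\lambda|y-\eta^+|$ for all $x,y\in\mathbb F$ with $x\le\eta<\eta^+\le y$. *)

theory Defs
  imports Complex_Main
begin

definition emin :: "nat \<Rightarrow> int" where
  "emin E = - (2 ^ (E - 1)) + 2"

definition emax :: "nat \<Rightarrow> int" where
  "emax E = 2 ^ (E - 1) - 1"

text \<open>The finite floats F (as real numbers): (-1)^b (s0.s1...sM)_2 * 2^e,
  i.e. m * 2^(e-M) with |m| < 2^(M+1) an integer and emin <= e <= emax.\<close>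
definition fl :: "nat \<Rightarrow> nat \<Rightarrow> real set" where
  "fl E M = {of_int m * 2 powr (real_of_int (e - int M)) | m e.
              \<bar>m\<bar> < 2 ^ (M + 1) \<and> emin E \<le> e \<and> e \<le> emax E}"

definition Omega :: "nat \<Rightarrow> nat \<Rightarrow> real" where
  "Omega E M = 2 powr (real_of_int (emax E)) * (2 - 2 powr (- real M))"

definition feps :: "nat \<Rightarrow> real" where
  "feps M = 2 powr (- real M - 1)"

text \<open>Even significand (canonical representation: normalized, or subnormal at emin).\<close>
definition fl_even :: "nat \<Rightarrow> nat \<Rightarrow> real \<Rightarrow> bool" where
  "fl_even E M y = (\<exists>m e. y = of_int m * 2 powr (real_of_int (e - int M)) \<and> even m
       \<and> \<bar>m\<bar> < 2 ^ (M + 1) \<and> emin E \<le> e \<and> e \<le> emax E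
       \<and> (e = emin E \<or> 2 ^ M \<le> \<bar>m\<bar>))"

datatype ext = Fin real | PInf | NInf | NaN

definition fl_bar :: "nat \<Rightarrow> nat \<Rightarrow> ext set" where
  "fl_bar E M = Fin ` fl E M \<union> {PInf, NInf, NaN}"

text \<open>Round to nearest, ties to even, with overflow.\<close>
definition rnd :: "nat \<Rightarrow> nat \<Rightarrow> real \<Rightarrow> ext" where
  "rnd E M x =
     (if Omega E M + 2 powr (real_of_int (emax E)) * feps M \<le> x then PInf
      else if x \<le> - (Omega E M + 2 powr (real_of_int (emax E)) * feps M) then NInf
      else Fin (THE y. y \<in> fl E M \<and> (\<forall>z \<in> fl E M. \<bar>x - y\<bar> \<le> \<bar>x - z\<bar>) \<and>
                 ((\<forall>z \<in> fl E M. \<bar>x - z\<bar> = \<bar>x - y\<bar> \<longrightarrow> z = y) \<or> fl_even E M y)))"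

fun fadd :: "nat \<Rightarrow> nat \<Rightarrow> ext \<Rightarrow> ext \<Rightarrow> ext" where
  "fadd E M (Fin a) (Fin b) = rnd E M (a + b)"
| "fadd E M NaN y = NaN"
| "fadd E M x NaN = NaN"
| "fadd E M PInf NInf = NaN"
| "fadd E M NInf PInf = NaN"
| "fadd E M PInf y = PInf"
| "fadd E M x PInf = PInf"
| "fadd E M NInf y = NInf"
| "fadd E M x NInf = NInf"

fun ext_sgn :: "ext \<Rightarrow> real" where
  "ext_sgn (Fin a) = sgn a"
| "ext_sgn PInf = 1"
| "ext_sgn NInf = -1"
| "ext_sgn NaN = 0"

fun fmul :: "nat \<Rightarrow> nat \<Rightarrow> ext \<Rightarrow> ext \<Rightarrow> ext" where
  "fmul E M (Fin a) (Fin b) = rnd E M (a * b)"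
| "fmul E M NaN y = NaN"
| "fmul E M x NaN = NaN"
| "fmul E M x y = (if ext_sgn x * ext_sgn y = 0 then NaN
                   else if ext_sgn x * ext_sgn y > 0 then PInf else NInf)"

fun ext_le :: "ext \<Rightarrow> ext \<Rightarrow> bool" where
  "ext_le (Fin a) (Fin b) = (a \<le> b)"
| "ext_le NaN y = False"
| "ext_le x NaN = False"
| "ext_le NInf y = True"
| "ext_le x PInf = True"
| "ext_le x y = False"

definition ext_less :: "ext \<Rightarrow> ext \<Rightarrow> bool" where
  "ext_less x y = (ext_le x y \<and> \<not> ext_le y x)"

definition ext_min :: "ext \<Rightarrow> ext \<Rightarrow> ext" where
  "ext_min x y = (if ext_le x y then x else y)"

definition ext_max :: "ext \<Rightarrow> ext \<Rightarrow> ext" where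
  "ext_max x y = (if ext_le x y then y else x)"

text \<open>Successor x^+ of a finite float below Omega.\<close>
definition fsucc :: "nat \<Rightarrow> nat \<Rightarrow> real \<Rightarrow> real" where
  "fsucc E M x = Min {y \<in> fl E M. x < y}"

datatype itv = Itv ext ext | Top

definition gamma :: "nat \<Rightarrow> nat \<Rightarrow> itv \<Rightarrow> ext set" where
  "gamma E M I = (case I of Top \<Rightarrow> fl_bar E M
                  | Itv a b \<Rightarrow> {x \<in> fl_bar E M. ext_le a x \<and> ext_le x b})"

definition abs_op :: "(ext \<Rightarrow> ext \<Rightarrow> ext) \<Rightarrow> itv \<Rightarrow> itv \<Rightarrow> itv" where
  "abs_op f I J = (case (I, J) of
      (Itv a b, Itv c d) \<Rightarrow>
        (if NaN \<in> {f a c, f a d, f b c, f b d} then Top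
         else Itv (ext_min (ext_min (f a c) (f a d)) (ext_min (f b c) (f b d)))
                  (ext_max (ext_max (f a c) (f a d)) (ext_max (f b c) (f b d))))
    | _ \<Rightarrow> Top)"

definition net1 :: "nat \<Rightarrow> nat \<Rightarrow> real \<Rightarrow> real \<Rightarrow> ext \<Rightarrow> ext" where
  "net1 E M w b x = fadd E M (fmul E M x (Fin w)) (Fin b)"

definition net1_sharp :: "nat \<Rightarrow> nat \<Rightarrow> real \<Rightarrow> real \<Rightarrow> itv \<Rightarrow> itv" where
  "net1_sharp E M w b I =
     abs_op (fadd E M) (abs_op (fmul E M) I (Itv (Fin w) (Fin w))) (Itv (Fin b) (Fin b))"

definition cond1 :: "nat \<Rightarrow> nat \<Rightarrow> (ext \<Rightarrow> ext) \<Rightarrow> real \<Rightarrow> real \<Rightarrow> real \<Rightarrow> bool" where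
  "cond1 E M \<sigma> c1 c2 \<eta> = (
    \<comment> \<open>(C1)\<close>
    (\<sigma> (Fin c1) = Fin 0 \<and>
     (\<exists>s2. \<sigma> (Fin c2) = Fin s2 \<and>
        feps M / 2 + 2 * feps M ^ 2 \<le> \<bar>s2\<bar> \<and> \<bar>s2\<bar> \<le> 5/4 - 2 * feps M \<and>
        (\<forall>x \<in> fl E M. min c1 c2 \<le> x \<and> x \<le> max c1 c2 \<longrightarrow>
           (\<exists>r. \<sigma> (Fin x) = Fin r \<and> min 0 s2 \<le> r \<and> r \<le> max 0 s2))) \<and>
     2 powr (real_of_int (emin E + 1)) \<le> max \<bar>c1\<bar> \<bar>c2\<bar>) \<and>
    \<comment> \<open>(C2)\<close>
    (2 powr (real_of_int (emin E + 5)) \<le> \<bar>\<eta>\<bar> \<and> \<bar>\<eta>\<bar> \<le> 4 - 8 * feps M \<and>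
     (\<exists>s t. \<sigma> (Fin \<eta>) = Fin s \<and> \<sigma> (Fin (fsucc E M \<eta>)) = Fin t \<and>
        2 powr (real_of_int (emin E + 5)) \<le> \<bar>s\<bar> \<and>
        \<bar>s\<bar> \<le> 2 powr (real_of_int (emax E - 6)) * \<bar>\<eta>\<bar> \<and>
        2 powr (real_of_int (emin E + 5)) \<le> \<bar>t\<bar> \<and>
        \<bar>t\<bar> \<le> 2 powr (real_of_int (emax E - 6)) * \<bar>\<eta>\<bar>) \<and>
     (\<forall>x \<in> fl E M. \<forall>y \<in> fl E M. x \<le> \<eta> \<and> fsucc E M \<eta> \<le> y \<longrightarrow>
        (ext_le (\<sigma> (Fin x)) (\<sigma> (Fin \<eta>)) \<and> ext_less (\<sigma> (Fin \<eta>)) (\<sigma> (Fin (fsucc E M \<eta>))) \<and>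
         ext_le (\<sigma> (Fin (fsucc E M \<eta>))) (\<sigma> (Fin y))) \<or>
        (ext_le (\<sigma> (Fin \<eta>)) (\<sigma> (Fin x)) \<and> ext_less (\<sigma> (Fin (fsucc E M \<eta>))) (\<sigma> (Fin \<eta>)) \<and>
         ext_le (\<sigma> (Fin y)) (\<sigma> (Fin (fsucc E M \<eta>)))))) \<and>
    \<comment> \<open>(C3)\<close>
    (\<exists>s t lam. \<sigma> (Fin \<eta>) = Fin s \<and> \<sigma> (Fin (fsucc E M \<eta>)) = Fin t \<and>
       0 \<le> lam \<and> lam \<le> 2 powr (real_of_int (emax E - 7)) * min \<bar>s\<bar> (2 ^ (M + 3)) \<and>
       (\<forall>x \<in> fl E M. \<forall>y \<in> fl E M. x \<le> \<eta> \<and> fsucc E M \<eta> \<le> y \<longrightarrow>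
          (\<exists>r. \<sigma> (Fin x) = Fin r \<and> \<bar>r - s\<bar> \<le> lam * \<bar>x - \<eta>\<bar>) \<and>
          (\<exists>r. \<sigma> (Fin y) = Fin r \<and> \<bar>r - t\<bar> \<le> lam * \<bar>y - fsucc E M \<eta>\<bar>))))"

end

theory Submission imports Defs begin

definition pw :: "int \<Rightarrow> real" where "pw e = 2 powr real_of_int e"

lemma pw_pos[simp]: "0 < pw e" by (simp add: pw_def)
lemma pw_nz[simp]: "pw e \<noteq> 0" by (simp add: pw_def)
lemma pw_ge0[simp]: "0 \<le> pw e" by (simp add: pw_def)
lemma abs_pw[simp]: "\<bar>pw e\<bar> = pw e" by (simp add: pw_def)
lemma pw_add: "pw (a + b) = pw a * pw b" by (simp add: pw_def powr_add)
lemma pw_mult_eq: "a + b = c \<Longrightarrow> pw a * pw b = pw c" using pw_add[of a b] by simp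
lemma pw_not_neg[simp]: "\<not> pw e < 0" using pw_pos[of e] by linarith
lemma pw_not_le0[simp]: "\<not> pw e \<le> 0" using pw_pos[of e] by linarith
lemma pw_nat: "pw (int n) = 2 ^ n" by (simp add: pw_def powr_realpow)
lemma pw_le_iff[simp]: "pw a \<le> pw b \<longleftrightarrow> a \<le> b" by (simp add: pw_def)
lemma pw_less_iff[simp]: "pw a < pw b \<longleftrightarrow> a < b" by (simp add: pw_def)
lemma pw_shift: "a \<le> b \<Longrightarrow> pw b = 2 ^ nat (b - a) * pw a"
  using pw_add[of "b - a" a] pw_nat[of "nat (b-a)"] by simp
lemma pw_0[simp]: "pw 0 = 1" by (simp add: pw_def)
lemma pw_1[simp]: "pw 1 = 2" by (simp add: pw_def)
lemma pw_diff: "pw (a - b) = pw a / pw b"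
  by (simp add: pw_def powr_diff)
lemma pw_neg: "pw (- a) = 1 / pw a"
  by (simp add: pw_def powr_minus_divide)

lemma fl_iff: "x \<in> fl E M \<longleftrightarrow> (\<exists>m e. x = of_int m * pw (e - int M) \<and> \<bar>m\<bar> < 2^(M+1) \<and> emin E \<le> e \<and> e \<le> emax E)"
  by (auto simp: fl_def pw_def)

lemma Omega_pw: "Omega E M = of_int (2^(M+1) - 1) * pw (emax E - int M)"
proof -
  have "Omega E M = pw (emax E) * (2 - pw (- int M))" by (simp add: Omega_def pw_def)
  also have "\<dots> = (2 * pw (int M) - 1) * pw (emax E - int M)"
    by (simp add: pw_diff pw_neg field_simps) 
  finally show ?thesis by (simp add: pw_nat)
qed

lemma T_pw: "Omega E M + 2 powr (real_of_int (emax E)) * feps M = pw (emax E) * (2 - pw (- int M - 1))"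
proof -
  have "feps M = pw (- int M - 1)" by (simp add: feps_def pw_def)
  moreover have "pw (- int M) = 2 * pw (- int M - 1)"
    using pw_add[of "- int M - 1" 1] by simp
  moreover have "2 powr (- real M) = pw (- int M)" by (simp add: pw_def)
  ultimately show ?thesis by (simp add: Omega_def pw_def[symmetric] algebra_simps)
qed

lemma rep_upper: "\<bar>m\<bar> < (2::int)^(M+1) \<Longrightarrow> \<bar>of_int m * pw (e - int M)\<bar> < pw (e + 1)"
proof -
  assume "\<bar>m\<bar> < (2::int)^(M+1)"
  hence "real_of_int \<bar>m\<bar> < 2^(M+1)" by (metis of_int_less_iff of_int_numeral of_int_power)
  hence "real_of_int \<bar>m\<bar> * pw (e - int M) < 2^(M+1) * pw (e - int M)" by simp
  also have "pw (e + 1) = pw (int (M+1) + (e - int M))" by (simp add: ac_simps)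
  hence "2^(M+1) * pw (e - int M) = pw (e + 1)"
    using pw_add[of "int (M+1)" "e - int M"] pw_nat[of "M+1"] by simp
  finally show ?thesis by (simp add: abs_mult)
qed

lemma int_mult_one: "0 < (P::real) \<Longrightarrow> 0 < of_int n * P \<Longrightarrow> of_int n * P \<le> P \<Longrightarrow> n = (1::int)"
proof -
  assume a: "0 < (P::real)" "0 < of_int n * P" "of_int n * P \<le> P"
  have "0 < n" using a by (auto simp: zero_less_mult_iff)
  moreover have "real_of_int n * P \<le> 1 * P" using a by simp
  hence "real_of_int n \<le> 1" using a(1) by (rule mult_right_le_imp_le)
  ultimately show ?thesis by linarith
qed

lemma int_mult_ge: "0 < P \<Longrightarrow> 0 < of_int n * P \<Longrightarrow> P \<le> of_int n * (P::real)"
proof -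
  assume a: "0 < P" "0 < of_int n * P"
  have "0 < n" using a by (simp add: zero_less_mult_iff)
  hence "1 \<le> real_of_int n" by simp
  thus ?thesis using a by (simp add: mult_le_cancel_right1)
qed

context
  fixes E M :: nat
  assumes E5: "E \<ge> 5" and M3: "M \<ge> 3"
begin

lemma emax_ge: "emax E \<ge> 15"
proof -
  have "(2::int)^4 \<le> 2^(E-1)" by (rule power_increasing) (use E5 in auto)
  thus ?thesis by (simp add: emax_def)
qed

lemma emin_eq: "emin E = 1 - emax E" by (simp add: emin_def emax_def)

lemma fl_intro: "\<bar>m\<bar> < 2^(M+1) \<Longrightarrow> emin E \<le> e \<Longrightarrow> e \<le> emax E \<Longrightarrow> of_int m * pw (e - int M) \<in> fl E M"
  by (auto simp: fl_iff)

lemma fl_bound: "x \<in> fl E M \<Longrightarrow> \<bar>x\<bar> \<le> Omega E M"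
proof -
  assume "x \<in> fl E M"
  then obtain m e where x: "x = of_int m * pw (e - int M)" "\<bar>m\<bar> < 2^(M+1)" "emin E \<le> e" "e \<le> emax E"
    by (auto simp: fl_iff)
  have "\<bar>m\<bar> \<le> 2^(M+1) - 1" using x(2) by linarith
  hence "real_of_int \<bar>m\<bar> \<le> of_int (2^(M+1) - 1)" by (metis of_int_le_iff)
  moreover have "pw (e - int M) \<le> pw (emax E - int M)" using x(4) by simp
  ultimately have "real_of_int \<bar>m\<bar> * pw (e - int M) \<le> of_int (2^(M+1) - 1) * pw (emax E - int M)"
    by (intro mult_mono) auto
  thus ?thesis by (simp add: x(1) abs_mult Omega_pw)
qed

lemma fl_neg: "x \<in> fl E M \<Longrightarrow> - x \<in> fl E M"
proof -
  assume "x \<in> fl E M"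
  then obtain m e where x: "x = of_int m * pw (e - int M)" "\<bar>m\<bar> < 2^(M+1)" "emin E \<le> e" "e \<le> emax E"
    by (auto simp: fl_iff)
  hence "of_int (-m) * pw (e - int M) \<in> fl E M" by (intro fl_intro) auto
  thus ?thesis using x(1) by simp
qed

lemma emin_le_emax: "emin E \<le> emax E" using emax_ge emin_eq by simp

lemma fl_zero: "0 \<in> fl E M"
  using fl_intro[of 0 "emin E"] emin_le_emax by simp

lemma Omega_fl: "Omega E M \<in> fl E M"
  unfolding Omega_pw by (rule fl_intro) (auto simp: emin_le_emax)

lemma Omega_ge: "Omega E M \<ge> pw (emax E)"
proof -
  have "(2::real) powr (- real M) \<le> 2 powr 0" by (rule powr_mono) auto
  thus ?thesis by (simp add: Omega_def pw_def[symmetric])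
qed

lemma G: assumes "\<bar>m\<bar> \<le> 2^(M+1)" "emin E \<le> e" "\<bar>of_int m * pw (e - int M)\<bar> \<le> Omega E M"
  shows "of_int m * pw (e - int M) \<in> fl E M"
proof (cases "emax E \<le> e")
  case True
  define m' where "m' = m * 2 ^ nat (e - emax E)"
  have eq: "of_int m * pw (e - int M) = of_int m' * pw (emax E - int M)"
    using pw_shift[of "emax E - int M" "e - int M"] True by (simp add: m'_def)
  have "real_of_int \<bar>m'\<bar> * pw (emax E - int M) \<le> of_int (2^(M+1) - 1) * pw (emax E - int M)"
    using assms(3) unfolding eq Omega_pw by (simp add: abs_mult)
  hence "real_of_int \<bar>m'\<bar> \<le> of_int (2^(M+1) - 1)" by simp
  hence "\<bar>m'\<bar> < 2^(M+1)" by linarith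
  thus ?thesis unfolding eq by (intro fl_intro) (auto simp: emin_le_emax)
next
  case False
  show ?thesis
  proof (cases "\<bar>m\<bar> < 2^(M+1)")
    case True thus ?thesis using False assms by (intro fl_intro) auto
  next
    case F2: False
    hence "\<bar>m\<bar> = 2^(M+1)" using assms(1) by simp
    hence "m = 2 * 2^M \<or> m = 2 * (-(2^M))" by auto
    then obtain s where s: "m = 2 * s" "\<bar>s\<bar> = 2^M"
    proof (elim disjE)
      assume "m = 2 * 2^M" thus ?thesis by (intro that[of "2^M"]) (auto simp: abs_of_nonneg)
    next
      assume "m = 2 * (-(2^M))" thus ?thesis by (intro that[of "-(2^M)"]) (auto simp: abs_of_nonneg)
    qed
    have eq: "of_int m * pw (e - int M) = of_int s * pw ((e + 1) - int M)"
      using pw_add[of "e - int M" 1] by (simp add: s(1) algebra_simps)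
    have "\<bar>s\<bar> < 2^(M+1)" using s(2) by simp
    thus ?thesis unfolding eq using False assms by (intro fl_intro) auto
  qed
qed

definition crep :: "real \<Rightarrow> int \<Rightarrow> int \<Rightarrow> bool" where
  "crep x m e \<longleftrightarrow> x = of_int m * pw (e - int M) \<and> \<bar>m\<bar> < 2^(M+1) \<and> emin E \<le> e \<and> e \<le> emax E
      \<and> (e = emin E \<or> 2^M \<le> \<bar>m\<bar>)"

lemma canon: assumes "x \<in> fl E M" shows "\<exists>m e. crep x m e"
proof -
  define S where "S = {e. emin E \<le> e \<and> e \<le> emax E \<and> (\<exists>m. x = of_int m * pw (e - int M) \<and> \<bar>m\<bar> < 2^(M+1))}"
  have fin: "finite S" by (rule finite_subset[of _ "{emin E..emax E}"]) (auto simp: S_def)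
  have ne: "S \<noteq> {}" using assms by (auto simp: S_def fl_iff)
  define e0 where "e0 = Min S"
  have "e0 \<in> S" using fin ne by (simp add: e0_def)
  then obtain m where m: "x = of_int m * pw (e0 - int M)" "\<bar>m\<bar> < 2^(M+1)" "emin E \<le> e0" "e0 \<le> emax E"
    by (auto simp: S_def)
  show ?thesis
  proof (cases "e0 = emin E \<or> 2^M \<le> \<bar>m\<bar>")
    case True thus ?thesis using m by (auto simp: crep_def)
  next
    case False
    have "x = of_int (2*m) * pw ((e0 - 1) - int M)"
      using pw_add[of "(e0 - 1) - int M" 1] by (simp add: m(1) algebra_simps)
    moreover have "\<bar>2*m\<bar> < 2^(M+1)" using False by (simp add: abs_mult)
    ultimately have "e0 - 1 \<in> S" using False m by (auto simp: S_def intro!: exI[of _ "2*m"])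
    hence "Min S \<le> e0 - 1" by (rule Min_le[OF fin])
    thus ?thesis by (simp add: e0_def)
  qed
qed

lemma crep_fl: "crep x m e \<Longrightarrow> x \<in> fl E M" by (auto simp: crep_def fl_iff)

lemma crep_lower: "crep x m e \<Longrightarrow> e = emin E \<or> pw e \<le> \<bar>x\<bar>"
proof -
  assume c: "crep x m e"
  show ?thesis
  proof (cases "e = emin E")
    case False
    hence "2^M \<le> \<bar>m\<bar>" using c by (auto simp: crep_def)
    hence "(2::real)^M \<le> of_int \<bar>m\<bar>" by (metis of_int_le_iff of_int_numeral of_int_power)
    hence "2^M * pw (e - int M) \<le> of_int \<bar>m\<bar> * pw (e - int M)" by simp
    moreover have "2^M * pw (e - int M) = pw e" using pw_add[of "int M" "e - int M"] pw_nat[of M] by simp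
    ultimately show ?thesis using c by (auto simp: crep_def abs_mult)
  qed simp
qed

lemma crep_upper: "crep x m e \<Longrightarrow> \<bar>x\<bar> < pw (e + 1)"
  using rep_upper by (auto simp: crep_def)

lemma crep_mono: "crep x m e \<Longrightarrow> crep y n f \<Longrightarrow> \<bar>x\<bar> \<le> \<bar>y\<bar> \<Longrightarrow> e \<le> f"
proof -
  assume a: "crep x m e" "crep y n f" "\<bar>x\<bar> \<le> \<bar>y\<bar>"
  show ?thesis
  proof (cases "e = emin E")
    case True thus ?thesis using a(2) by (simp add: crep_def)
  next
    case False
    hence "pw e < pw (f + 1)" using crep_lower[OF a(1)] crep_upper[OF a(2)] a(3) by linarith
    thus ?thesis by simp
  qed
qed

lemma crep_small: "crep x m e \<Longrightarrow> \<bar>x\<bar> < pw j \<Longrightarrow> emin E < j \<Longrightarrow> e < j"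
  using crep_lower[of x m e] by (metis not_less order.strict_trans1 pw_le_iff)

lemma crep_neg: "crep x m e \<Longrightarrow> crep (-x) (-m) e" by (auto simp: crep_def)

lemma K: assumes c: "crep y m e" and y0: "0 \<le> y" and f: "f \<in> fl E M" "y < f"
  shows "y + pw (e - int M) \<le> f"
proof -
  obtain n g where n: "f = of_int n * pw (g - int M)" "\<bar>n\<bar> < 2^(M+1)" "emin E \<le> g" "g \<le> emax E"
    using f(1) by (auto simp: fl_iff)
  show ?thesis
  proof (cases "e \<le> g")
    case True
    have "f = of_int (n * 2 ^ nat (g - e)) * pw (e - int M)"
      using pw_shift[of "e - int M" "g - int M"] True by (simp add: n(1))
    hence "f - y = of_int (n * 2 ^ nat (g - e) - m) * pw (e - int M)"
      using c by (simp add: crep_def algebra_simps)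
    hence "pw (e - int M) \<le> f - y" using int_mult_ge[of "pw (e - int M)" "n * 2 ^ nat (g - e) - m"] f(2) by simp
    thus ?thesis by simp
  next
    case False
    hence "e \<noteq> emin E" using n(3) by auto
    hence "pw e \<le> y" using crep_lower[OF c] y0 by auto
    moreover have "\<bar>f\<bar> < pw (g + 1)" using rep_upper[OF n(2)] n(1) by simp
    moreover have "pw (g + 1) \<le> pw e" using False by simp
    ultimately show ?thesis using f(2) by linarith
  qed
qed

lemma fl_finite: "finite (fl E M)"
proof -
  have "fl E M \<subseteq> (\<lambda>(m,e). of_int m * pw (e - int M)) ` ({-(2^(M+1))..2^(M+1)} \<times> {emin E..emax E})"
  proof
    fix x assume "x \<in> fl E M"
    then obtain m e where x: "x = of_int m * pw (e - int M)" "\<bar>m\<bar> < 2^(M+1)" "emin E \<le> e" "e \<le> emax E"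
      by (auto simp: fl_iff)
    hence "(m, e) \<in> {-(2^(M+1))..2^(M+1)} \<times> {emin E..emax E}" by auto
    thus "x \<in> (\<lambda>(m,e). of_int m * pw (e - int M)) ` ({-(2^(M+1))..2^(M+1)} \<times> {emin E..emax E})"
      using x(1) by (auto intro: rev_image_eqI)
  qed
  thus ?thesis by (rule finite_subset) auto
qed

lemma fsucc: assumes "x < Omega E M"
  shows "fsucc E M x \<in> fl E M" "x < fsucc E M x" "\<And>y. y \<in> fl E M \<Longrightarrow> x < y \<Longrightarrow> fsucc E M x \<le> y"
proof -
  define S where "S = {y \<in> fl E M. x < y}"
  have fin: "finite S" using fl_finite by (simp add: S_def)
  have ne: "S \<noteq> {}" using assms Omega_fl by (auto simp: S_def)
  have "Min S \<in> S" using fin ne by simp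
  thus "fsucc E M x \<in> fl E M" "x < fsucc E M x" by (auto simp: fsucc_def S_def)
  show "\<And>y. y \<in> fl E M \<Longrightarrow> x < y \<Longrightarrow> fsucc E M x \<le> y"
    using fin by (auto simp: fsucc_def S_def[symmetric]) (auto simp: S_def)
qed

lemma fsucc_below: "x < Omega E M \<Longrightarrow> y \<in> fl E M \<Longrightarrow> y < fsucc E M x \<Longrightarrow> y \<le> x"
  using fsucc(3) by force


lemma even_rep: "fl_even E M y \<Longrightarrow> \<exists>m e. y = of_int m * pw (e - int M) \<and> even m \<and> \<bar>m\<bar> < 2^(M+1) \<and> emin E \<le> e \<and> e \<le> emax E"
  by (auto simp: fl_even_def pw_def)

lemma crep_even: "crep y m e \<Longrightarrow> even m \<Longrightarrow> fl_even E M y"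
  unfolding crep_def fl_even_def pw_def by blast

lemma even_bound: assumes "even m" "\<bar>m\<bar> < (2::int)^(M+1)"
  shows "\<bar>m + 1\<bar> < 2^(M+1)" "\<bar>m - 1\<bar> < 2^(M+1)"
proof -
  obtain t where t: "m = 2 * t" using assms(1) by (elim evenE)
  have "\<bar>t\<bar> < 2^M" using assms(2) by (simp add: t abs_mult)
  thus "\<bar>m + 1\<bar> < 2^(M+1)" "\<bar>m - 1\<bar> < 2^(M+1)" unfolding t by (simp_all add: abs_less_iff)
qed

definition adj :: "real \<Rightarrow> real \<Rightarrow> bool" where
  "adj y1 y2 \<longleftrightarrow> (\<forall>f \<in> fl E M. \<not> (y1 < f \<and> f < y2))"

lemma not_both_even: assumes "y1 < y2" "adj y1 y2" "fl_even E M y1" "fl_even E M y2"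
  shows False
proof -
  obtain m1 e1 where r1: "y1 = of_int m1 * pw (e1 - int M)" "even m1" "\<bar>m1\<bar> < 2^(M+1)" "emin E \<le> e1" "e1 \<le> emax E"
    using even_rep[OF assms(3)] by blast
  obtain m2 e2 where r2: "y2 = of_int m2 * pw (e2 - int M)" "even m2" "\<bar>m2\<bar> < 2^(M+1)" "emin E \<le> e2" "e2 \<le> emax E"
    using even_rep[OF assms(4)] by blast
  have f1: "of_int (m1 + 1) * pw (e1 - int M) \<in> fl E M"
    using even_bound[OF r1(2,3)] r1 by (intro fl_intro) auto
  have "y1 < of_int (m1 + 1) * pw (e1 - int M)" using r1(1) by (simp add: algebra_simps)
  hence le1: "y2 \<le> y1 + pw (e1 - int M)" using assms(2) f1 r1(1) unfolding adj_def by (force simp: algebra_simps)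
  have f2: "of_int (m2 - 1) * pw (e2 - int M) \<in> fl E M"
    using even_bound[OF r2(2,3)] r2 by (intro fl_intro) auto
  have "of_int (m2 - 1) * pw (e2 - int M) < y2" using r2(1) by (simp add: algebra_simps)
  hence le2: "y2 - pw (e2 - int M) \<le> y1" using assms(2) f2 r2(1) unfolding adj_def by (force simp: algebra_simps)
  show False
  proof (cases "e1 \<le> e2")
    case True
    define n where "n = m2 * 2 ^ nat (e2 - e1) - m1"
    have "y2 - y1 = of_int n * pw (e1 - int M)"
      using pw_shift[of "e1 - int M" "e2 - int M"] True r1(1) r2(1) by (simp add: n_def algebra_simps)
    hence "n = 1" using le1 assms(1) by (intro int_mult_one[of "pw (e1 - int M)"]) (simp, linarith, linarith)
    moreover have "even n" using r1(2) r2(2) by (simp add: n_def)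
    ultimately show False by simp
  next
    case False
    define n where "n = m2 - m1 * 2 ^ nat (e1 - e2)"
    have "y2 - y1 = of_int n * pw (e2 - int M)"
      using pw_shift[of "e2 - int M" "e1 - int M"] False r1(1) r2(1) by (simp add: n_def algebra_simps)
    hence "n = 1" using le2 assms(1) by (intro int_mult_one[of "pw (e2 - int M)"]) (simp, linarith, linarith)
    moreover have "even n" using r1(2) r2(2) by (simp add: n_def)
    ultimately show False by simp
  qed
qed

lemma one_even_core: assumes c1: "crep y1 m1 e1" and c2: "crep y2 m2 e2" and lt: "y1 < y2"
  and ad: "adj y1 y2" and o1: "odd m1" and o2: "odd m2" and le: "e1 \<le> e2"
  shows False
proof -
  have r1: "y1 = of_int m1 * pw (e1 - int M)" "\<bar>m1\<bar> < 2^(M+1)" "emin E \<le> e1" "e1 \<le> emax E"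
    using c1 by (auto simp: crep_def)
  have r2: "y2 = of_int m2 * pw (e2 - int M)" "\<bar>m2\<bar> < 2^(M+1)" "emin E \<le> e2" "e2 \<le> emax E"
    using c2 by (auto simp: crep_def)
  have f1: "of_int (m1 + 1) * pw (e1 - int M) \<in> fl E M"
  proof (cases "\<bar>m1 + 1\<bar> < 2^(M+1)")
    case True thus ?thesis using r1 by (intro fl_intro) auto
  next
    case False
    hence m1: "m1 = 2^(M+1) - 1" using r1(2) by auto
    show ?thesis
    proof (cases "e1 = emax E")
      case True
      hence "y1 = Omega E M" using r1(1) m1 by (simp add: Omega_pw)
      moreover have "y2 \<le> Omega E M" using fl_bound[OF crep_fl[OF c2]] by simp
      ultimately show ?thesis using lt by simp
    next
      case False
      have "of_int (m1 + 1) * pw (e1 - int M) = of_int (2^M) * pw ((e1 + 1) - int M)"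
        using pw_add[of "e1 - int M" 1] m1 by (simp add: algebra_simps)
      moreover have "of_int (2^M) * pw ((e1 + 1) - int M) \<in> fl E M"
        using False r1 by (intro fl_intro) auto
      ultimately show ?thesis by simp
    qed
  qed
  have "y1 < of_int (m1 + 1) * pw (e1 - int M)" using r1(1) by (simp add: algebra_simps)
  hence le1: "y2 \<le> y1 + pw (e1 - int M)" using ad f1 r1(1) unfolding adj_def by (force simp: algebra_simps)
  define j where "j = nat (e2 - e1)"
  define n where "n = m2 * 2 ^ j - m1"
  have "y2 - y1 = of_int n * pw (e1 - int M)"
    using pw_shift[of "e1 - int M" "e2 - int M"] le r1(1) r2(1) by (simp add: n_def j_def algebra_simps)
  hence "n = 1" using le1 lt by (intro int_mult_one[of "pw (e1 - int M)"]) (simp, linarith, linarith)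
  hence eq: "m2 * 2 ^ j = m1 + 1" by (simp add: n_def)
  show False
  proof (cases "j = 0")
    case True thus False using eq o1 o2 by simp
  next
    case False
    hence "e1 < e2" using j_def by simp
    hence "e2 \<noteq> emin E" using r1(3) by simp
    hence big: "2^M \<le> \<bar>m2\<bar>" using c2 by (simp add: crep_def)
    have "(2::int) ^ 1 \<le> 2 ^ j" using False by (intro power_increasing) auto
    hence "\<bar>m2\<bar> * 2 \<le> \<bar>m2\<bar> * 2 ^ j" by (intro mult_left_mono) auto
    also have "\<dots> = \<bar>m1 + 1\<bar>" using eq by (metis abs_mult abs_of_nonneg zero_le_power zero_le_numeral)
    also have "\<dots> \<le> 2^(M+1)" using r1(2) by simp
    finally have "\<bar>m2\<bar> \<le> 2^M" by simp
    hence "\<bar>m2\<bar> = 2^M" using big by simp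
    hence "even \<bar>m2\<bar>" using M3 by simp
    thus False using o2 by simp
  qed
qed

lemma one_even: assumes "y1 \<in> fl E M" "y2 \<in> fl E M" "y1 < y2" "adj y1 y2"
  shows "fl_even E M y1 \<or> fl_even E M y2"
proof -
  obtain m1 e1 where c1: "crep y1 m1 e1" using canon[OF assms(1)] by blast
  obtain m2 e2 where c2: "crep y2 m2 e2" using canon[OF assms(2)] by blast
  show ?thesis
  proof (cases "even m1 \<or> even m2")
    case True thus ?thesis using crep_even c1 c2 by blast
  next
    case False
    show ?thesis
    proof (cases "e1 \<le> e2")
      case True thus ?thesis using one_even_core[OF c1 c2 assms(3,4)] False by blast
    next
      case F2: False
      have "adj (-y2) (-y1)" using assms(4) unfolding adj_def
        by (metis fl_neg neg_less_iff_less minus_minus)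
      thus ?thesis using one_even_core[OF crep_neg[OF c2] crep_neg[OF c1]] F2 False assms(3) by auto
    qed
  qed
qed

lemma nearest_ex: "\<exists>y \<in> fl E M. \<forall>f \<in> fl E M. \<bar>x - y\<bar> \<le> \<bar>x - f\<bar>"
proof -
  define D where "D = Min ((\<lambda>f. \<bar>x - f\<bar>) ` fl E M)"
  have fin: "finite ((\<lambda>f. \<bar>x - f\<bar>) ` fl E M)" using fl_finite by simp
  have ne: "(\<lambda>f. \<bar>x - f\<bar>) ` fl E M \<noteq> {}" using fl_zero by auto
  have "D \<in> (\<lambda>f. \<bar>x - f\<bar>) ` fl E M" using fin ne by (simp add: D_def)
  then obtain y where y: "y \<in> fl E M" "D = \<bar>x - y\<bar>" by auto
  have "\<forall>f \<in> fl E M. D \<le> \<bar>x - f\<bar>" using fin by (simp add: D_def)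
  thus ?thesis using y by auto
qed

lemma rnd_near: assumes "\<bar>x\<bar> < Omega E M + 2 powr (real_of_int (emax E)) * feps M"
  shows "\<exists>y. rnd E M x = Fin y \<and> y \<in> fl E M \<and> (\<forall>f\<in>fl E M. \<bar>x - y\<bar> \<le> \<bar>x - f\<bar>)"
proof -
  define P where "P y \<longleftrightarrow> y \<in> fl E M \<and> (\<forall>z \<in> fl E M. \<bar>x - y\<bar> \<le> \<bar>x - z\<bar>) \<and>
                 ((\<forall>z \<in> fl E M. \<bar>x - z\<bar> = \<bar>x - y\<bar> \<longrightarrow> z = y) \<or> fl_even E M y)" for y
  have rnd_eq: "rnd E M x = Fin (THE y. P y)"
    using assms unfolding rnd_def P_def by (auto simp: abs_less_iff)
  obtain y0 where y0: "y0 \<in> fl E M" "\<forall>f \<in> fl E M. \<bar>x - y0\<bar> \<le> \<bar>x - f\<bar>" using nearest_ex by blast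
  have ex1: "\<exists>!y. P y"
  proof (cases "\<forall>z \<in> fl E M. \<bar>x - z\<bar> = \<bar>x - y0\<bar> \<longrightarrow> z = y0")
    case True
    show ?thesis
    proof (rule ex1I[of _ y0])
      show "P y0" using True y0 by (simp add: P_def)
      fix y assume "P y"
      hence "y \<in> fl E M" "\<bar>x - y\<bar> \<le> \<bar>x - y0\<bar>" using y0 by (auto simp: P_def)
      moreover have "\<bar>x - y0\<bar> \<le> \<bar>x - y\<bar>" using y0 calculation by auto
      ultimately show "y = y0" using True by auto
    qed
  next
    case False
    then obtain y' where y': "y' \<in> fl E M" "\<bar>x - y'\<bar> = \<bar>x - y0\<bar>" "y' \<noteq> y0" by auto
    define y1 where "y1 = min y0 y'"
    define y2 where "y2 = max y0 y'"
    define D where "D = \<bar>x - y0\<bar>"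
    have yy: "y1 \<in> fl E M" "y2 \<in> fl E M" "y1 < y2" "\<bar>x - y1\<bar> = D" "\<bar>x - y2\<bar> = D"
      using y0 y' by (auto simp: y1_def y2_def D_def min_def max_def)
    have near: "\<forall>f \<in> fl E M. D \<le> \<bar>x - f\<bar>" using y0 by (simp add: D_def)
    have mid: "x = (y1 + y2) / 2" using yy(3,4,5) by (auto simp: abs_if split: if_splits)
    have ad: "adj y1 y2"
      unfolding adj_def
    proof (intro ballI notI)
      fix f assume "f \<in> fl E M" "y1 < f \<and> f < y2"
      hence "\<bar>x - f\<bar> < D" using mid yy(4) by (auto simp: abs_if)
      thus False using near \<open>f \<in> fl E M\<close> by force
    qed
    have two: "\<And>f. \<bar>x - f\<bar> = D \<Longrightarrow> f = y1 \<or> f = y2"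
      using mid yy(3,4) by (auto simp: abs_if split: if_splits; linarith)
    obtain ye where ye: "ye = y1 \<or> ye = y2" "fl_even E M ye"
      using one_even[OF yy(1,2,3) ad] by blast
    show ?thesis
    proof (rule ex1I[of _ ye])
      show "P ye" unfolding P_def using ye yy near by auto
      fix y assume Py: "P y"
      hence yfl: "y \<in> fl E M" and "\<bar>x - y\<bar> \<le> D" using yy ye by (auto simp: P_def)
      hence dy: "\<bar>x - y\<bar> = D" using near by force
      hence y12: "y = y1 \<or> y = y2" using two by simp
      show "y = ye"
      proof (rule ccontr)
        assume ne: "y \<noteq> ye"
        have dye: "\<bar>x - ye\<bar> = D" using ye yy by auto
        have yefl: "ye \<in> fl E M" using ye yy by auto
        have "fl_even E M y" using Py ne dye dy yefl unfolding P_def by force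
        thus False using not_both_even[OF yy(3) ad] ye y12 ne by auto
      qed
    qed
  qed
  have "P (THE y. P y)" using ex1 by (rule theI')
  thus ?thesis using rnd_eq by (auto simp: P_def)
qed

lemma T_gt: "Omega E M < Omega E M + 2 powr (real_of_int (emax E)) * feps M"
  by (simp add: feps_def)

lemma rnd_bounds: assumes "\<bar>x\<bar> < Omega E M + 2 powr (real_of_int (emax E)) * feps M"
  shows "\<exists>y. rnd E M x = Fin y \<and> y \<in> fl E M \<and> (\<forall>f\<in>fl E M. x \<le> f \<longrightarrow> y \<le> f) \<and> (\<forall>f\<in>fl E M. f \<le> x \<longrightarrow> f \<le> y)"
proof -
  obtain y where y: "rnd E M x = Fin y" "y \<in> fl E M" "\<forall>f\<in>fl E M. \<bar>x - y\<bar> \<le> \<bar>x - f\<bar>"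
    using rnd_near[OF assms] by blast
  have "\<forall>f\<in>fl E M. x \<le> f \<longrightarrow> y \<le> f"
  proof (intro ballI impI)
    fix f assume "f \<in> fl E M" "x \<le> f"
    thus "y \<le> f" using y(3) by (force simp: abs_if split: if_splits)
  qed
  moreover have "\<forall>f\<in>fl E M. f \<le> x \<longrightarrow> f \<le> y"
  proof (intro ballI impI)
    fix f assume "f \<in> fl E M" "f \<le> x"
    thus "f \<le> y" using y(3) by (force simp: abs_if split: if_splits)
  qed
  ultimately show ?thesis using y by blast
qed

lemma rnd_exact: assumes "x \<in> fl E M" shows "rnd E M x = Fin x"
proof -
  have "\<bar>x\<bar> < Omega E M + 2 powr (real_of_int (emax E)) * feps M"
    using fl_bound[OF assms] T_gt by linarith
  then obtain y where y: "rnd E M x = Fin y" "\<forall>f\<in>fl E M. \<bar>x - y\<bar> \<le> \<bar>x - f\<bar>"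
    using rnd_near by blast
  have "\<bar>x - y\<bar> \<le> 0" using y(2) assms by force
  thus ?thesis using y(1) by simp
qed


abbreviation Tb where "Tb \<equiv> Omega E M + 2 powr (real_of_int (emax E)) * feps M"

lemma pw2: "pw 2 = 4" using pw_nat[of 2] by simp

lemma Tb_big: "pw (emax E) + 5 < Tb"
proof -
  have "pw (- int M - 1) \<le> pw (- 1)" by (subst pw_le_iff) simp
  hence a: "pw (- int M - 1) \<le> 1/2" by (simp add: pw_neg)
  have "pw 15 \<le> pw (emax E)" using emax_ge by (subst pw_le_iff) simp
  moreover have "pw 15 = 2^15" using pw_nat[of 15] by simp
  ultimately have b: "32768 \<le> pw (emax E)" by simp
  have c: "pw (emax E) * pw (- int M - 1) \<le> pw (emax E) * (1/2)" using a by (intro mult_left_mono) auto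
  have "Tb = 2 * pw (emax E) - pw (emax E) * pw (- int M - 1)" by (subst T_pw) (simp add: algebra_simps)
  thus ?thesis using b c by linarith
qed

lemma Omega_big: "5 < Omega E M"
proof -
  have "pw 15 \<le> pw (emax E)" using emax_ge by (subst pw_le_iff) simp
  moreover have "pw 15 = 2^15" using pw_nat[of 15] by simp
  ultimately show ?thesis using Omega_ge by simp
qed

lemma one_fl: "1 \<in> fl E M"
proof -
  have "of_int (2^M) * pw (0 - int M) \<in> fl E M" using emax_ge emin_eq by (intro fl_intro) auto
  moreover have "of_int (2^M) * pw (0 - int M) = (1::real)" by (simp add: pw_neg pw_nat)
  ultimately show ?thesis by simp
qed

lemma gamma_sub: "A \<le> lo \<Longrightarrow> hi \<le> B \<Longrightarrow> gamma E M (Itv (Fin lo) (Fin hi)) \<subseteq> Fin ` {A..B}"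
proof
  fix x assume a: "A \<le> lo" "hi \<le> B" "x \<in> gamma E M (Itv (Fin lo) (Fin hi))"
  hence "ext_le (Fin lo) x" "ext_le x (Fin hi)" by (auto simp: gamma_def)
  thus "x \<in> Fin ` {A..B}" using a(1,2) by (cases x) auto
qed

lemma net_gamma: assumes "fmul E M (Fin x1) (Fin w) = Fin p1" "fmul E M (Fin x2) (Fin w) = Fin p2"
  "rnd E M (p1 + b) = Fin q1" "rnd E M (p2 + b) = Fin q2" "A \<le> q1" "q1 \<le> B" "A \<le> q2" "q2 \<le> B"
  shows "gamma E M (net1_sharp E M w b (Itv (Fin x1) (Fin x2))) \<subseteq> Fin ` {A..B}"
proof -
  have "net1_sharp E M w b (Itv (Fin x1) (Fin x2)) = Itv (Fin (min q1 q2)) (Fin (max q1 q2))"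
    using assms(1-4) by (cases "p1 \<le> p2"; cases "q1 \<le> q2")
      (auto simp: net1_sharp_def abs_op_def ext_min_def ext_max_def min_def max_def)
  thus ?thesis using assms(5-8) by (simp add: gamma_sub)
qed

lemma net_lo: assumes "x1 * w \<in> fl E M" "x2 * w \<in> fl E M" "\<bar>x1 * w + b\<bar> < Tb" "\<bar>x2 * w + b\<bar> < Tb"
  "B \<in> fl E M" "x1 * w + b \<le> B" "x2 * w + b \<le> B"
  shows "gamma E M (net1_sharp E M w b (Itv (Fin x1) (Fin x2))) \<subseteq> Fin ` {- Omega E M..B}"
proof -
  obtain q1 where q1: "rnd E M (x1 * w + b) = Fin q1" "q1 \<in> fl E M" "q1 \<le> B"
    using rnd_bounds[OF assms(3)] assms(5,6) by blast
  obtain q2 where q2: "rnd E M (x2 * w + b) = Fin q2" "q2 \<in> fl E M" "q2 \<le> B"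
    using rnd_bounds[OF assms(4)] assms(5,7) by blast
  show ?thesis
    by (rule net_gamma[of x1 w "x1 * w" x2 "x2 * w" b q1 q2])
       (use q1 q2 assms(1,2) rnd_exact fl_bound[of q1] fl_bound[of q2] in auto)
qed

lemma net_hi: assumes "x1 * w \<in> fl E M" "x2 * w \<in> fl E M" "\<bar>x1 * w + b\<bar> < Tb" "\<bar>x2 * w + b\<bar> < Tb"
  "A \<in> fl E M" "A \<le> x1 * w + b" "A \<le> x2 * w + b"
  shows "gamma E M (net1_sharp E M w b (Itv (Fin x1) (Fin x2))) \<subseteq> Fin ` {A..Omega E M}"
proof -
  obtain q1 where q1: "rnd E M (x1 * w + b) = Fin q1" "q1 \<in> fl E M" "A \<le> q1"
    using rnd_bounds[OF assms(3)] assms(5,6) by blast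
  obtain q2 where q2: "rnd E M (x2 * w + b) = Fin q2" "q2 \<in> fl E M" "A \<le> q2"
    using rnd_bounds[OF assms(4)] assms(5,7) by blast
  show ?thesis
    by (rule net_gamma[of x1 w "x1 * w" x2 "x2 * w" b q1 q2])
       (use q1 q2 assms(1,2) rnd_exact fl_bound[of q1] fl_bound[of q2] in auto)
qed


lemma case1: assumes eta: "\<eta> \<in> fl E M" "0 < \<eta>" "\<eta> < 4" and z: "z \<in> fl E M" "0 \<le> z" "z < 1"
  shows "\<exists>w b. w \<in> fl E M \<and> b \<in> fl E M \<and>
    gamma E M (net1_sharp E M w b (Itv (Fin (-1)) (Fin z))) \<subseteq> Fin ` {- Omega E M .. \<eta>} \<and>
    gamma E M (net1_sharp E M w b (Itv (Fin (fsucc E M z)) (Fin 1))) \<subseteq> Fin ` {fsucc E M \<eta> .. Omega E M}"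
proof -
  obtain m\<eta> p where c\<eta>: "crep \<eta> m\<eta> p" using canon[OF eta(1)] by blast
  have r\<eta>: "\<eta> = of_int m\<eta> * pw (p - int M)" "\<bar>m\<eta>\<bar> < 2^(M+1)" "emin E \<le> p" "p \<le> emax E"
    using c\<eta> by (auto simp: crep_def)
  have p1: "p \<le> 1" using crep_small[OF c\<eta>, of 2] pw2 eta emin_eq emax_ge by simp
  have m\<eta>0: "0 < m\<eta>" using r\<eta>(1) eta(2) by (simp add: zero_less_mult_iff)
  obtain mz ez where cz: "crep z mz ez" using canon[OF z(1)] by blast
  have rz: "z = of_int mz * pw (ez - int M)" "\<bar>mz\<bar> < 2^(M+1)" "emin E \<le> ez" "ez \<le> emax E"
    using cz by (auto simp: crep_def)
  have ez0: "ez < 0" using crep_small[OF cz, of 0] z emin_eq emax_ge by simp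
  have mz0: "0 \<le> mz" using rz(1) z(2) by (simp add: zero_le_mult_iff)
  define k where "k = p - ez"
  have k: "emin E \<le> k" "k \<le> emax E" using p1 ez0 r\<eta>(3) rz(3) emin_eq unfolding k_def by linarith+
  define w where "w = pw k"
  have w0: "0 < w" by (simp add: w_def)
  have wle: "w \<le> pw (emax E)" using k by (simp add: w_def)
  have "w = of_int (2^M) * pw (k - int M)" using pw_mult_eq[of "int M" "k - int M" k] by (simp add: w_def pw_nat)
  hence wfl: "w \<in> fl E M" using k fl_intro[of "2^M" k] by simp
  have zw: "z * w = of_int mz * pw (p - int M)"
    using pw_mult_eq[of "ez - int M" k "p - int M"] by (simp add: rz(1) w_def k_def)
  have zwfl: "z * w \<in> fl E M" unfolding zw using rz(2) r\<eta>(3,4) by (rule fl_intro)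
  define b where "b = \<eta> - z * w"
  have hb: "b = of_int (m\<eta> - mz) * pw (p - int M)" by (simp add: b_def zw r\<eta>(1) left_diff_distrib)
  have "\<bar>m\<eta> - mz\<bar> < 2^(M+1)" using m\<eta>0 mz0 r\<eta>(2) rz(2) by (simp add: abs_less_iff)
  hence bfl: "b \<in> fl E M" unfolding hb using r\<eta>(3,4) by (rule fl_intro)
  have "\<bar>b\<bar> < pw (p + 1)" unfolding hb using \<open>\<bar>m\<eta> - mz\<bar> < 2^(M+1)\<close> by (rule rep_upper)
  moreover have "pw (p + 1) \<le> pw 2" using p1 by (subst pw_le_iff) simp
  ultimately have babs: "\<bar>b\<bar> < 4" using pw2 by simp
  have zO: "z < Omega E M" using z Omega_big by simp
  define zp where "zp = fsucc E M z"
  have zp: "zp \<in> fl E M" "z < zp" "zp \<le> 1"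
    using fsucc[OF zO] one_fl z(3) unfolding zp_def by auto
  have gap: "z + pw (ez - int M) \<le> zp" using K[OF cz z(2) zp(1,2)] .
  obtain m' e' where cp: "crep zp m' e'" using canon[OF zp(1)] by blast
  have rp: "zp = of_int m' * pw (e' - int M)" "\<bar>m'\<bar> < 2^(M+1)" using cp by (auto simp: crep_def)
  have e': "ez \<le> e'" using crep_mono[OF cz cp] z(2) zp(2) by simp
  have zpw: "zp * w = of_int m' * pw ((e' + k) - int M)"
    using pw_mult_eq[of "e' - int M" k "(e' + k) - int M"] by (simp add: rp(1) w_def)
  have "zp * w \<le> w" using zp(3) w0 by simp
  moreover have "0 \<le> zp * w" using zp(2) z(2) w0 by simp
  ultimately have "\<bar>of_int m' * pw ((e' + k) - int M)\<bar> \<le> Omega E M"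
    using wle Omega_ge unfolding zpw[symmetric] by simp
  hence zpwfl: "zp * w \<in> fl E M" unfolding zpw using rp(2) e' k r\<eta>(3) k_def
    by (intro G) auto
  have "pw (ez - int M) * w \<le> (zp - z) * w" using gap w0 by (intro mult_right_mono) auto
  moreover have "pw (ez - int M) * w = pw (p - int M)" using pw_mult_eq[of "ez - int M" k "p - int M"] by (simp add: w_def k_def)
  ultimately have gap2: "pw (p - int M) \<le> zp * w - z * w" by (simp add: algebra_simps)
  define \<eta>1 where "\<eta>1 = \<eta> + pw (p - int M)"
  have h\<eta>1: "\<eta>1 = of_int (m\<eta> + 1) * pw (p - int M)" by (simp add: \<eta>1_def r\<eta>(1) algebra_simps)
  have "pw (p - int M) \<le> pw 0" using p1 M3 by (subst pw_le_iff) simp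
  hence "\<bar>\<eta>1\<bar> \<le> Omega E M" using eta Omega_big by (simp add: \<eta>1_def)
  hence \<eta>1fl: "\<eta>1 \<in> fl E M" unfolding h\<eta>1 using r\<eta>(2,3) by (intro G) (auto simp: h\<eta>1[symmetric])
  have \<eta>O: "\<eta> < Omega E M" using eta Omega_big by simp
  have hle: "fsucc E M \<eta> \<le> \<eta>1" using fsucc(3)[OF \<eta>O \<eta>1fl] by (simp add: \<eta>1_def)
  have hfl: "fsucc E M \<eta> \<in> fl E M" using fsucc(1)[OF \<eta>O] .
  have big: "pw (emax E) + 5 < Tb" by (rule Tb_big)
  have zw0: "0 \<le> z * w" using z(2) w0 by simp
  have g1: "gamma E M (net1_sharp E M w b (Itv (Fin (-1)) (Fin z))) \<subseteq> Fin ` {- Omega E M .. \<eta>}"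
    by (rule net_lo) (use wfl zwfl fl_neg[OF wfl] babs wle big eta zw0 w0 in \<open>auto simp: b_def\<close>)
  have g2: "gamma E M (net1_sharp E M w b (Itv (Fin zp) (Fin 1))) \<subseteq> Fin ` {fsucc E M \<eta> .. Omega E M}"
  proof (rule net_hi)
    show "zp * w \<in> fl E M" by (rule zpwfl)
    show "1 * w \<in> fl E M" using wfl by simp
    show "\<bar>zp * w + b\<bar> < Tb" using \<open>zp * w \<le> w\<close> \<open>0 \<le> zp * w\<close> babs wle big by (simp add: abs_less_iff)
    show "\<bar>1 * w + b\<bar> < Tb" using babs wle big w0 by (simp add: abs_less_iff)
    show "fsucc E M \<eta> \<in> fl E M" by (rule hfl)
    show "fsucc E M \<eta> \<le> zp * w + b" using hle gap2 by (simp add: b_def \<eta>1_def)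
    show "fsucc E M \<eta> \<le> 1 * w + b" using hle gap2 \<open>zp * w \<le> w\<close> by (simp add: b_def \<eta>1_def)
  qed
  show ?thesis using wfl bfl g1 g2 unfolding zp_def by blast
qed


lemma scaled_fl: assumes c: "crep x mx ex" and x: "0 \<le> x" "x \<le> 1" and e: "emin E \<le> ex + k" "k \<le> emax E"
  shows "x * pw k \<in> fl E M"
proof -
  have r: "x = of_int mx * pw (ex - int M)" "\<bar>mx\<bar> < 2^(M+1)" using c by (auto simp: crep_def)
  have eq: "x * pw k = of_int mx * pw ((ex + k) - int M)"
    using pw_mult_eq[of "ex - int M" k "(ex + k) - int M"] by (simp add: r(1))
  have a1: "x * pw k \<le> pw k" using x by simp
  have a2: "pw k \<le> pw (emax E)" using e by simp
  have a3: "0 \<le> x * pw k" using x by simp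
  have "x * pw k \<le> Omega E M" using a1 a2 Omega_ge by linarith
  hence "\<bar>of_int mx * pw ((ex + k) - int M)\<bar> \<le> Omega E M" using a3 unfolding eq[symmetric] by simp
  thus ?thesis unfolding eq using r(2) e by (intro G) auto
qed

lemma small_rep: assumes "x \<in> fl E M" "0 \<le> x" "x < 1"
  shows "\<exists>m e. crep x m e \<and> 0 \<le> m \<and> e < 0"
proof -
  obtain m e where c: "crep x m e" using canon[OF assms(1)] by blast
  have "e < 0" using crep_small[OF c, of 0] assms emin_eq emax_ge by simp
  moreover have "0 \<le> m" using c assms(2) by (auto simp: crep_def zero_le_mult_iff)
  ultimately show ?thesis using c by blast
qed

lemma pw_scale: "pw (e - int M) * pw (q - e) = pw (q - int M)"
  by (rule pw_mult_eq) simp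

lemma case2: assumes eta: "\<eta> \<in> fl E M" "0 < \<eta>" "\<eta> < 4" and z: "z \<in> fl E M" "-1 \<le> z" "z < 0"
  shows "\<exists>w b. w \<in> fl E M \<and> b \<in> fl E M \<and>
    gamma E M (net1_sharp E M w b (Itv (Fin (-1)) (Fin z))) \<subseteq> Fin ` {fsucc E M \<eta> .. Omega E M} \<and>
    gamma E M (net1_sharp E M w b (Itv (Fin (fsucc E M z)) (Fin 1))) \<subseteq> Fin ` {- Omega E M .. \<eta>}"
proof -
  obtain m\<eta> p where c\<eta>: "crep \<eta> m\<eta> p" using canon[OF eta(1)] by blast
  have r\<eta>: "\<eta> = of_int m\<eta> * pw (p - int M)" "\<bar>m\<eta>\<bar> < 2^(M+1)" "emin E \<le> p" "p \<le> emax E"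
    using c\<eta> by (auto simp: crep_def)
  have p1: "p \<le> 1" using crep_small[OF c\<eta>, of 2] pw2 eta emin_eq emax_ge by simp
  have m\<eta>0: "0 < m\<eta>" using r\<eta>(1) eta(2) by (simp add: zero_less_mult_iff)
  have zO: "z < Omega E M" using z Omega_big by simp
  define zp where "zp = fsucc E M z"
  have zp: "zp \<in> fl E M" "z < zp" "zp \<le> 0"
    using fsucc[OF zO] fl_zero z(3) unfolding zp_def by auto
  define a where "a = - zp"
  have a: "a \<in> fl E M" "0 \<le> a" "a < 1" using zp z fl_neg by (auto simp: a_def)
  obtain ma ea where ca: "crep a ma ea" "0 \<le> ma" "ea < 0" using small_rep[OF a] by blast
  have ra: "a = of_int ma * pw (ea - int M)" "\<bar>ma\<bar> < 2^(M+1)" "emin E \<le> ea" using ca by (auto simp: crep_def)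
  define k where "k = p - ea"
  have k: "emin E \<le> k" "k \<le> emax E" using p1 ca(3) r\<eta>(3) ra(3) emin_eq unfolding k_def by linarith+
  define W where "W = pw k"
  define w where "w = - W"
  have W0: "0 < W" by (simp add: W_def)
  have Wle: "W \<le> pw (emax E)" using k by (simp add: W_def)
  have "W = of_int (2^M) * pw (k - int M)" using pw_mult_eq[of "int M" "k - int M" k] by (simp add: W_def pw_nat)
  hence Wfl: "W \<in> fl E M" using k fl_intro[of "2^M" k] by simp
  have wfl: "w \<in> fl E M" using fl_neg[OF Wfl] by (simp add: w_def)
  have "zp * w = a * W" by (simp add: a_def w_def)
  also have "a * W = of_int ma * (pw (ea - int M) * pw (p - ea))" by (simp add: ra(1) W_def k_def)
  also have "\<dots> = of_int ma * pw (p - int M)" by (simp only: pw_scale)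
  finally have zpw: "zp * w = of_int ma * pw (p - int M)" .
  have zpwfl: "zp * w \<in> fl E M" unfolding zpw using ra(2) r\<eta>(3,4) by (rule fl_intro)
  define b where "b = \<eta> - zp * w"
  have hb: "b = of_int (m\<eta> - ma) * pw (p - int M)" by (simp add: b_def zpw r\<eta>(1) left_diff_distrib)
  have "\<bar>m\<eta> - ma\<bar> < 2^(M+1)" using m\<eta>0 ca(2) r\<eta>(2) ra(2) by (simp add: abs_less_iff)
  hence bfl: "b \<in> fl E M" unfolding hb using r\<eta>(3,4) by (rule fl_intro)
  have "\<bar>b\<bar> < pw (p + 1)" unfolding hb using \<open>\<bar>m\<eta> - ma\<bar> < 2^(M+1)\<close> by (rule rep_upper)
  moreover have "pw (p + 1) \<le> pw 2" using p1 by (subst pw_le_iff) simp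
  ultimately have babs: "\<bar>b\<bar> < 4" using pw2 by simp
  have nz: "- z \<in> fl E M" "a < - z" using fl_neg[OF z(1)] zp(2) by (auto simp: a_def)
  have gap: "a + pw (ea - int M) \<le> - z" using K[OF ca(1) a(2) nz] .
  obtain mz' ez' where cz': "crep (-z) mz' ez'" using canon[OF nz(1)] by blast
  have ez': "ea \<le> ez'" using crep_mono[OF ca(1) cz'] a(2) nz(2) by simp
  have "(-z) * W \<in> fl E M" unfolding W_def using cz' z ez' k k_def r\<eta>(3)
    by (intro scaled_fl) auto
  hence zwfl: "z * w \<in> fl E M" by (simp add: w_def)
  have "pw (ea - int M) * W \<le> (-z - a) * W" using gap W0 by (intro mult_right_mono) auto
  moreover have "pw (ea - int M) * W = pw (p - int M)" using pw_scale[of ea p] by (simp add: W_def k_def)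
  ultimately have gap2: "pw (p - int M) \<le> z * w - zp * w" by (simp add: algebra_simps w_def a_def)
  define \<eta>1 where "\<eta>1 = \<eta> + pw (p - int M)"
  have h\<eta>1: "\<eta>1 = of_int (m\<eta> + 1) * pw (p - int M)" by (simp add: \<eta>1_def r\<eta>(1) algebra_simps)
  have "pw (p - int M) \<le> pw 0" using p1 M3 by (subst pw_le_iff) simp
  hence "\<bar>\<eta>1\<bar> \<le> Omega E M" using eta Omega_big by (simp add: \<eta>1_def)
  hence \<eta>1fl: "\<eta>1 \<in> fl E M" unfolding h\<eta>1 using r\<eta>(2,3) by (intro G) (auto simp: h\<eta>1[symmetric])
  have \<eta>O: "\<eta> < Omega E M" using eta Omega_big by simp
  have hle: "fsucc E M \<eta> \<le> \<eta>1" using fsucc(3)[OF \<eta>O \<eta>1fl] by (simp add: \<eta>1_def)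
  have hfl: "fsucc E M \<eta> \<in> fl E M" using fsucc(1)[OF \<eta>O] .
  have big: "pw (emax E) + 5 < Tb" by (rule Tb_big)
  have zW1: "-1 * W \<le> z * W" using z(2) W0 by (intro mult_right_mono) auto
  have zW2: "z * W \<le> 0" using z(3) W0 by (intro mult_nonpos_nonneg) auto
  have zw: "z * w \<le> W" "0 \<le> z * w" using zW1 zW2 by (auto simp: w_def)
  have aW: "0 \<le> a * W" "a * W \<le> W" using a W0 by auto
  have zpw2: "zp * w = a * W" by (simp add: a_def w_def)
  have g1: "gamma E M (net1_sharp E M w b (Itv (Fin (-1)) (Fin z))) \<subseteq> Fin ` {fsucc E M \<eta> .. Omega E M}"
  proof (rule net_hi)
    show "-1 * w \<in> fl E M" using Wfl by (simp add: w_def)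
    show "z * w \<in> fl E M" by (rule zwfl)
    show "\<bar>-1 * w + b\<bar> < Tb" using babs Wle big W0 by (simp add: abs_less_iff w_def)
    show "\<bar>z * w + b\<bar> < Tb" using babs Wle big zw by (simp add: abs_less_iff)
    show "fsucc E M \<eta> \<in> fl E M" by (rule hfl)
    show "fsucc E M \<eta> \<le> z * w + b" using hle gap2 by (simp add: b_def \<eta>1_def)
    show "fsucc E M \<eta> \<le> -1 * w + b" using hle gap2 zw by (simp add: b_def \<eta>1_def w_def)
  qed
  have g2: "gamma E M (net1_sharp E M w b (Itv (Fin zp) (Fin 1))) \<subseteq> Fin ` {- Omega E M .. \<eta>}"
  proof (rule net_lo)
    show "zp * w \<in> fl E M" by (rule zpwfl)
    show "1 * w \<in> fl E M" using wfl by simp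
    show "\<bar>zp * w + b\<bar> < Tb" using babs Wle big aW zpw2 by (simp add: abs_less_iff)
    show "\<bar>1 * w + b\<bar> < Tb" using babs Wle big W0 by (simp add: abs_less_iff w_def)
    show "\<eta> \<in> fl E M" by (rule eta(1))
    show "zp * w + b \<le> \<eta>" by (simp add: b_def)
    show "1 * w + b \<le> \<eta>" using aW zpw2 by (simp add: b_def w_def)
  qed
  show ?thesis using wfl bfl g1 g2 unfolding zp_def by blast
qed

lemma neg_eta: assumes "\<eta> \<in> fl E M" "\<eta> < 0" "-4 < \<eta>"
  shows "\<exists>mh q. crep (fsucc E M \<eta>) mh q \<and> mh \<le> 0 \<and> q \<le> 1 \<and> fsucc E M \<eta> - pw (q - int M) \<le> \<eta>
     \<and> \<eta> < fsucc E M \<eta> \<and> fsucc E M \<eta> \<le> 0 \<and> fsucc E M \<eta> \<in> fl E M"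
proof -
  have \<eta>O: "\<eta> < Omega E M" using assms Omega_big by simp
  define h where "h = fsucc E M \<eta>"
  have h: "h \<in> fl E M" "\<eta> < h" "h \<le> 0" using fsucc[OF \<eta>O] fl_zero assms unfolding h_def by auto
  obtain mh q where c: "crep h mh q" using canon[OF h(1)] by blast
  have r: "h = of_int mh * pw (q - int M)" "\<bar>mh\<bar> < 2^(M+1)" "emin E \<le> q" using c by (auto simp: crep_def)
  have "\<bar>h\<bar> < pw 2" using h assms pw2 by simp
  hence q1: "q \<le> 1" using crep_small[OF c, of 2] emin_eq emax_ge by simp
  have mh0: "mh \<le> 0" using r(1) h(3) by (auto simp: mult_le_0_iff)
  define h1 where "h1 = h - pw (q - int M)"
  have hh1: "h1 = of_int (mh - 1) * pw (q - int M)" by (simp add: h1_def r(1) algebra_simps)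
  have "pw (q - int M) \<le> pw 0" using q1 M3 by (subst pw_le_iff) simp
  hence "pw (q - int M) \<le> 1" by simp
  hence "\<bar>h1\<bar> \<le> Omega E M" using h assms Omega_big pw_ge0[of "q - int M"] unfolding h1_def abs_le_iff by (intro conjI; linarith)
  hence h1fl: "h1 \<in> fl E M" unfolding hh1 using r(2,3) by (intro G) (auto simp: hh1[symmetric])
  have "h1 < h" by (simp add: h1_def)
  hence "h1 \<le> \<eta>" using fsucc_below[OF \<eta>O h1fl] by (simp add: h_def)
  thus ?thesis using c mh0 q1 h unfolding h_def h1_def by blast
qed


lemma case3: assumes eta: "\<eta> \<in> fl E M" "\<eta> < 0" "-4 < \<eta>" and z: "z \<in> fl E M" "0 \<le> z" "z < 1"
  shows "\<exists>w b. w \<in> fl E M \<and> b \<in> fl E M \<and>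
    gamma E M (net1_sharp E M w b (Itv (Fin (-1)) (Fin z))) \<subseteq> Fin ` {fsucc E M \<eta> .. Omega E M} \<and>
    gamma E M (net1_sharp E M w b (Itv (Fin (fsucc E M z)) (Fin 1))) \<subseteq> Fin ` {- Omega E M .. \<eta>}"
proof -
  define h where "h = fsucc E M \<eta>"
  obtain mh q where H: "crep h mh q" "mh \<le> 0" "q \<le> 1" "h - pw (q - int M) \<le> \<eta>" "\<eta> < h" "h \<le> 0" "h \<in> fl E M"
    using neg_eta[OF eta] unfolding h_def by blast
  have rh: "h = of_int mh * pw (q - int M)" "\<bar>mh\<bar> < 2^(M+1)" "emin E \<le> q" "q \<le> emax E"
    using H(1) by (auto simp: crep_def)
  obtain mz ez where cz: "crep z mz ez" "0 \<le> mz" "ez < 0" using small_rep[OF z] by blast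
  have rz: "z = of_int mz * pw (ez - int M)" "\<bar>mz\<bar> < 2^(M+1)" "emin E \<le> ez" using cz by (auto simp: crep_def)
  define k where "k = q - ez"
  have k: "emin E \<le> k" "k \<le> emax E" using H(3) cz(3) rh(3) rz(3) emin_eq unfolding k_def by linarith+
  define W where "W = pw k"
  define w where "w = - W"
  have W0: "0 < W" by (simp add: W_def)
  have Wle: "W \<le> pw (emax E)" using k by (simp add: W_def)
  have "W = of_int (2^M) * pw (k - int M)" using pw_mult_eq[of "int M" "k - int M" k] by (simp add: W_def pw_nat)
  hence Wfl: "W \<in> fl E M" using k fl_intro[of "2^M" k] by simp
  have wfl: "w \<in> fl E M" using fl_neg[OF Wfl] by (simp add: w_def)
  have "z * W = of_int mz * (pw (ez - int M) * pw (q - ez))" by (simp add: rz(1) W_def k_def)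
  also have "\<dots> = of_int mz * pw (q - int M)" by (simp only: pw_scale)
  finally have zW: "z * W = of_int mz * pw (q - int M)" .
  have zw: "z * w = of_int (- mz) * pw (q - int M)" by (simp add: w_def zW)
  have zwfl: "z * w \<in> fl E M" unfolding zw using rz(2) rh(3,4) by (intro fl_intro) auto
  define b where "b = h - z * w"
  have hb: "b = of_int (mh + mz) * pw (q - int M)" unfolding b_def zw rh(1) by (simp add: algebra_simps)
  have "\<bar>mh + mz\<bar> < 2^(M+1)" using H(2) cz(2) rh(2) rz(2) by (simp add: abs_less_iff)
  hence bfl: "b \<in> fl E M" unfolding hb using rh(3,4) by (rule fl_intro)
  have "\<bar>b\<bar> < pw (q + 1)" unfolding hb using \<open>\<bar>mh + mz\<bar> < 2^(M+1)\<close> by (rule rep_upper)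
  moreover have "pw (q + 1) \<le> pw 2" using H(3) by (subst pw_le_iff) simp
  ultimately have babs: "\<bar>b\<bar> < 4" using pw2 by simp
  have zO: "z < Omega E M" using z Omega_big by simp
  define zp where "zp = fsucc E M z"
  have zp: "zp \<in> fl E M" "z < zp" "zp \<le> 1"
    using fsucc[OF zO] one_fl z(3) unfolding zp_def by auto
  have gap: "z + pw (ez - int M) \<le> zp" using K[OF cz(1) z(2) zp(1,2)] .
  obtain m' e' where cp: "crep zp m' e'" using canon[OF zp(1)] by blast
  have e': "ez \<le> e'" using crep_mono[OF cz(1) cp] z(2) zp(2) by simp
  have "zp * W \<in> fl E M" unfolding W_def using cp zp z e' k k_def rh(3)
    by (intro scaled_fl) auto
  hence zpwfl: "zp * w \<in> fl E M" using fl_neg by (simp add: w_def)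
  have "pw (ez - int M) * W \<le> (zp - z) * W" using gap W0 by (intro mult_right_mono) auto
  moreover have "pw (ez - int M) * W = pw (q - int M)" using pw_scale[of ez q] by (simp add: W_def k_def)
  ultimately have gap2: "pw (q - int M) \<le> zp * W - z * W" by (simp add: algebra_simps)
  have big: "pw (emax E) + 5 < Tb" by (rule Tb_big)
  have zWb: "0 \<le> z * W" "z * W \<le> W" using z W0 by auto
  have zpWb: "0 \<le> zp * W" "zp * W \<le> W" using z zp W0 by auto
  have g1: "gamma E M (net1_sharp E M w b (Itv (Fin (-1)) (Fin z))) \<subseteq> Fin ` {h .. Omega E M}"
  proof (rule net_hi)
    show "-1 * w \<in> fl E M" using Wfl by (simp add: w_def)
    show "z * w \<in> fl E M" by (rule zwfl)
    show "\<bar>-1 * w + b\<bar> < Tb" using babs Wle big W0 by (simp add: abs_less_iff w_def)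
    show "\<bar>z * w + b\<bar> < Tb" using babs Wle big zWb by (simp add: abs_less_iff w_def)
    show "h \<in> fl E M" by (rule H(7))
    show "h \<le> z * w + b" by (simp add: b_def)
    show "h \<le> -1 * w + b" using zWb by (simp add: b_def w_def)
  qed
  have g2: "gamma E M (net1_sharp E M w b (Itv (Fin zp) (Fin 1))) \<subseteq> Fin ` {- Omega E M .. \<eta>}"
  proof (rule net_lo)
    show "zp * w \<in> fl E M" by (rule zpwfl)
    show "1 * w \<in> fl E M" using wfl by simp
    show "\<bar>zp * w + b\<bar> < Tb" using babs Wle big zpWb by (simp add: abs_less_iff w_def)
    show "\<bar>1 * w + b\<bar> < Tb" using babs Wle big W0 by (simp add: abs_less_iff w_def)
    show "\<eta> \<in> fl E M" by (rule eta(1))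
    show "zp * w + b \<le> \<eta>" using gap2 H(4) by (simp add: b_def w_def)
    show "1 * w + b \<le> \<eta>" using gap2 H(4) zpWb by (simp add: b_def w_def)
  qed
  show ?thesis using wfl bfl g1 g2 unfolding zp_def h_def by blast
qed

lemma case4: assumes eta: "\<eta> \<in> fl E M" "\<eta> < 0" "-4 < \<eta>" and z: "z \<in> fl E M" "-1 \<le> z" "z < 0"
  shows "\<exists>w b. w \<in> fl E M \<and> b \<in> fl E M \<and>
    gamma E M (net1_sharp E M w b (Itv (Fin (-1)) (Fin z))) \<subseteq> Fin ` {- Omega E M .. \<eta>} \<and>
    gamma E M (net1_sharp E M w b (Itv (Fin (fsucc E M z)) (Fin 1))) \<subseteq> Fin ` {fsucc E M \<eta> .. Omega E M}"
proof -
  define h where "h = fsucc E M \<eta>"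
  obtain mh q where H: "crep h mh q" "mh \<le> 0" "q \<le> 1" "h - pw (q - int M) \<le> \<eta>" "\<eta> < h" "h \<le> 0" "h \<in> fl E M"
    using neg_eta[OF eta] unfolding h_def by blast
  have rh: "h = of_int mh * pw (q - int M)" "\<bar>mh\<bar> < 2^(M+1)" "emin E \<le> q" "q \<le> emax E"
    using H(1) by (auto simp: crep_def)
  have zO: "z < Omega E M" using z Omega_big by simp
  define zp where "zp = fsucc E M z"
  have zp: "zp \<in> fl E M" "z < zp" "zp \<le> 0"
    using fsucc[OF zO] fl_zero z(3) unfolding zp_def by auto
  define a where "a = - zp"
  have a: "a \<in> fl E M" "0 \<le> a" "a < 1" using zp z fl_neg by (auto simp: a_def)
  obtain ma ea where ca: "crep a ma ea" "0 \<le> ma" "ea < 0" using small_rep[OF a] by blast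
  have ra: "a = of_int ma * pw (ea - int M)" "\<bar>ma\<bar> < 2^(M+1)" "emin E \<le> ea" using ca by (auto simp: crep_def)
  define k where "k = q - ea"
  have k: "emin E \<le> k" "k \<le> emax E" using H(3) ca(3) rh(3) ra(3) emin_eq unfolding k_def by linarith+
  define W where "W = pw k"
  define w where "w = W"
  have W0: "0 < W" by (simp add: W_def)
  have Wle: "W \<le> pw (emax E)" using k by (simp add: W_def)
  have "W = of_int (2^M) * pw (k - int M)" using pw_mult_eq[of "int M" "k - int M" k] by (simp add: W_def pw_nat)
  hence Wfl: "W \<in> fl E M" using k fl_intro[of "2^M" k] by simp
  have wfl: "w \<in> fl E M" using Wfl by (simp add: w_def)
  have "a * W = of_int ma * (pw (ea - int M) * pw (q - ea))" by (simp add: ra(1) W_def k_def)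
  also have "\<dots> = of_int ma * pw (q - int M)" by (simp only: pw_scale)
  finally have aW: "a * W = of_int ma * pw (q - int M)" .
  have zpw: "zp * w = of_int (- ma) * pw (q - int M)" using aW by (simp add: w_def a_def)
  have zpwfl: "zp * w \<in> fl E M" unfolding zpw using ra(2) rh(3,4) by (intro fl_intro) auto
  define b where "b = h - zp * w"
  have hb: "b = of_int (mh + ma) * pw (q - int M)" unfolding b_def zpw rh(1) by (simp add: algebra_simps)
  have "\<bar>mh + ma\<bar> < 2^(M+1)" using H(2) ca(2) rh(2) ra(2) by (simp add: abs_less_iff)
  hence bfl: "b \<in> fl E M" unfolding hb using rh(3,4) by (rule fl_intro)
  have "\<bar>b\<bar> < pw (q + 1)" unfolding hb using \<open>\<bar>mh + ma\<bar> < 2^(M+1)\<close> by (rule rep_upper)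
  moreover have "pw (q + 1) \<le> pw 2" using H(3) by (subst pw_le_iff) simp
  ultimately have babs: "\<bar>b\<bar> < 4" using pw2 by simp
  have nz: "- z \<in> fl E M" "a < - z" using fl_neg[OF z(1)] zp(2) by (auto simp: a_def)
  have gap: "a + pw (ea - int M) \<le> - z" using K[OF ca(1) a(2) nz] .
  obtain mz' ez' where cz': "crep (-z) mz' ez'" using canon[OF nz(1)] by blast
  have ez': "ea \<le> ez'" using crep_mono[OF ca(1) cz'] a(2) nz(2) by simp
  have "(-z) * W \<in> fl E M" unfolding W_def using cz' z ez' k k_def rh(3)
    by (intro scaled_fl) auto
  hence zwfl: "z * w \<in> fl E M" using fl_neg[of "-(z*W)"] by (simp add: w_def)
  have "pw (ea - int M) * W \<le> (-z - a) * W" using gap W0 by (intro mult_right_mono) auto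
  moreover have "pw (ea - int M) * W = pw (q - int M)" using pw_scale[of ea q] by (simp add: W_def k_def)
  ultimately have gap2: "pw (q - int M) \<le> - (z * W) - a * W" by (simp add: algebra_simps)
  have big: "pw (emax E) + 5 < Tb" by (rule Tb_big)
  have zW1: "-1 * W \<le> z * W" using z(2) W0 by (intro mult_right_mono) auto
  have zW2: "z * W \<le> 0" using z(3) W0 by (intro mult_nonpos_nonneg) auto
  have aWb: "0 \<le> a * W" "a * W \<le> W" using a W0 by auto
  have zpw2: "zp * w = - (a * W)" by (simp add: a_def w_def)
  have g1: "gamma E M (net1_sharp E M w b (Itv (Fin (-1)) (Fin z))) \<subseteq> Fin ` {- Omega E M .. \<eta>}"
  proof (rule net_lo)
    show "-1 * w \<in> fl E M" using fl_neg[OF Wfl] by (simp add: w_def)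
    show "z * w \<in> fl E M" by (rule zwfl)
    show "\<bar>-1 * w + b\<bar> < Tb" using babs Wle big W0 by (simp add: abs_less_iff w_def)
    show "\<bar>z * w + b\<bar> < Tb" using babs Wle big zW1 zW2 by (simp add: abs_less_iff w_def)
    show "\<eta> \<in> fl E M" by (rule eta(1))
    show "z * w + b \<le> \<eta>" using gap2 H(4) zpw2 by (simp add: b_def w_def)
    show "-1 * w + b \<le> \<eta>" using gap2 H(4) zpw2 zW1 by (simp add: b_def w_def)
  qed
  have g2: "gamma E M (net1_sharp E M w b (Itv (Fin zp) (Fin 1))) \<subseteq> Fin ` {h .. Omega E M}"
  proof (rule net_hi)
    show "zp * w \<in> fl E M" by (rule zpwfl)
    show "1 * w \<in> fl E M" using wfl by simp
    show "\<bar>zp * w + b\<bar> < Tb" using babs Wle big aWb zpw2 by (simp add: abs_less_iff)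
    show "\<bar>1 * w + b\<bar> < Tb" using babs Wle big W0 by (simp add: abs_less_iff w_def)
    show "h \<in> fl E M" by (rule H(7))
    show "h \<le> zp * w + b" by (simp add: b_def)
    show "h \<le> 1 * w + b" using aWb zpw2 by (simp add: b_def w_def)
  qed
  show ?thesis using wfl bfl g1 g2 unfolding zp_def h_def by blast
qed


lemma net_const: assumes "\<eta> \<in> fl E M"
  shows "gamma E M (net1_sharp E M 0 \<eta> (Itv (Fin x1) (Fin x2))) \<subseteq> Fin ` {- Omega E M .. \<eta>}"
proof (rule net_lo)
  have "\<bar>\<eta>\<bar> < Tb" using fl_bound[OF assms] T_gt by linarith
  thus "\<bar>x1 * 0 + \<eta>\<bar> < Tb" "\<bar>x2 * 0 + \<eta>\<bar> < Tb" by simp_all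
qed (use assms fl_zero in auto)

lemma two_fl: "2 \<in> fl E M"
proof -
  have "of_int (2^M) * pw (1 - int M) \<in> fl E M" using emax_ge emin_eq by (intro fl_intro) auto
  moreover have "of_int (2^M) * pw (1 - int M) = (2::real)"
    using pw_mult_eq[of "int M" "1 - int M" 1] by (simp add: pw_nat)
  ultimately show ?thesis by simp
qed

lemma main:
  assumes "\<eta> \<in> fl E M" and "cond1 E M \<sigma> c1 c2 \<eta>"
    and "z \<in> fl E M" and "\<bar>z\<bar> \<le> fsucc E M 1"
  shows "\<exists>w b. w \<in> fl E M \<and> b \<in> fl E M \<and>
    ((( -1 \<le> z \<longrightarrow> gamma E M (net1_sharp E M w b (Itv (Fin (-1)) (Fin z)))
                        \<subseteq> Fin ` {- Omega E M .. \<eta>}) \<and>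
      (fsucc E M z \<le> 1 \<longrightarrow> gamma E M (net1_sharp E M w b (Itv (Fin (fsucc E M z)) (Fin 1)))
                        \<subseteq> Fin ` {fsucc E M \<eta> .. Omega E M})) \<or>
     (( -1 \<le> z \<longrightarrow> gamma E M (net1_sharp E M w b (Itv (Fin (-1)) (Fin z)))
                        \<subseteq> Fin ` {fsucc E M \<eta> .. Omega E M}) \<and>
      (fsucc E M z \<le> 1 \<longrightarrow> gamma E M (net1_sharp E M w b (Itv (Fin (fsucc E M z)) (Fin 1)))
                        \<subseteq> Fin ` {- Omega E M .. \<eta>})))"
proof -
  have c: "2 powr (real_of_int (emin E + 5)) \<le> \<bar>\<eta>\<bar>" "\<bar>\<eta>\<bar> \<le> 4 - 8 * feps M"
    using assms(2) unfolding cond1_def by blast+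
  have "0 < feps M" by (simp add: feps_def)
  hence e4: "\<bar>\<eta>\<bar> < 4" using c(2) by linarith
  hence e4': "\<eta> < 4" "-4 < \<eta>" by auto
  have "0 < 2 powr (real_of_int (emin E + 5))" by simp
  hence e0: "\<eta> \<noteq> 0" using c(1) by auto
  have one_O: "1 < Omega E M" using Omega_big by simp
  have f1: "fsucc E M 1 \<le> 2" using fsucc(3)[OF one_O two_fl] by simp
  show ?thesis
  proof (cases "z < -1")
    case True
    have "gamma E M (net1_sharp E M 0 \<eta> (Itv (Fin (fsucc E M z)) (Fin 1))) \<subseteq> Fin ` {- Omega E M .. \<eta>}"
      using net_const[OF assms(1)] .
    thus ?thesis using True fl_zero assms(1) by (intro exI[of _ 0] exI[of _ \<eta>]) auto
  next
    case F1: False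
    show ?thesis
    proof (cases "1 \<le> z")
      case True
      have zO: "z < Omega E M" using assms(4) f1 Omega_big by simp
      have "\<not> fsucc E M z \<le> 1" using fsucc(2)[OF zO] True by simp
      moreover have "gamma E M (net1_sharp E M 0 \<eta> (Itv (Fin (-1)) (Fin z))) \<subseteq> Fin ` {- Omega E M .. \<eta>}"
        using net_const[OF assms(1)] .
      ultimately show ?thesis using fl_zero assms(1) by (intro exI[of _ 0] exI[of _ \<eta>]) auto
    next
      case False
      hence z1: "-1 \<le> z" "z < 1" using F1 by auto
      show ?thesis
      proof (cases "0 < \<eta>")
        case eta_pos: True
        show ?thesis
        proof (cases "0 \<le> z")
          case True
          thus ?thesis using case1[OF assms(1) eta_pos e4'(1) assms(3) True z1(2)] by blast
        next
          case False
          thus ?thesis using case2[OF assms(1) eta_pos e4'(1) assms(3) z1(1)] by auto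
        qed
      next
        case False
        hence eta_neg: "\<eta> < 0" using e0 by simp
        show ?thesis
        proof (cases "0 \<le> z")
          case True
          thus ?thesis using case3[OF assms(1) eta_neg e4'(2) assms(3) True z1(2)] by blast
        next
          case False
          thus ?thesis using case4[OF assms(1) eta_neg e4'(2) assms(3) z1(1)] by auto
        qed
      qed
    qed
  qed
qed

end

theorem lemma6:
  fixes E M :: nat and \<sigma> :: "ext \<Rightarrow> ext" and c1 c2 \<eta> z :: real
  assumes "E \<ge> 5" and "3 \<le> M" and "M \<le> 2 ^ (E - 1)"
    and "c1 \<in> fl E M" and "c2 \<in> fl E M" and "\<eta> \<in> fl E M"
    and "cond1 E M \<sigma> c1 c2 \<eta>"
    and "z \<in> fl E M" and "\<bar>z\<bar> \<le> fsucc E M 1"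
  shows "\<exists>w b. w \<in> fl E M \<and> b \<in> fl E M \<and>
    ((( -1 \<le> z \<longrightarrow> gamma E M (net1_sharp E M w b (Itv (Fin (-1)) (Fin z)))
                        \<subseteq> Fin ` {- Omega E M .. \<eta>}) \<and>
      (fsucc E M z \<le> 1 \<longrightarrow> gamma E M (net1_sharp E M w b (Itv (Fin (fsucc E M z)) (Fin 1)))
                        \<subseteq> Fin ` {fsucc E M \<eta> .. Omega E M})) \<or>
     (( -1 \<le> z \<longrightarrow> gamma E M (net1_sharp E M w b (Itv (Fin (-1)) (Fin z)))
                        \<subseteq> Fin ` {fsucc E M \<eta> .. Omega E M}) \<and>
      (fsucc E M z \<le> 1 \<longrightarrow> gamma E M (net1_sharp E M w b (Itv (Fin (fsucc E M z)) (Fin 1)))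
                        \<subseteq> Fin ` {- Omega E M .. \<eta>})))"
  using main[OF assms(1,2) assms(6,7,8,9)] .

end
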